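(* For every $d\ge 2$, $\dfrac{1}{6d-7}\le p_c^{\operatorname{face}}(d)$.
   Context: A face is a $(d-1)$-dimensional elementary cube in $\mathbb{R}^d$, i.e. a product $I_1\times\cdots\times I_d$ of intervals $[l,l]$ or $[l,l+1]$ ($l\in\mathbb{Z}$) with exactly one degenerate factor. Two faces $Q,Q'$ are adjacent if $Q\cap Q'$ is a $(d-2)$-dimensional elementary cube. In face percolation with parameter $p$, each face is open independently with probability $p$ (product measure $P_p$). $C(Q)$ is the set of open faces connected to $Q$ by chains of successively adjacent open faces, $|C(Q)|$ its cardinality, $Q_0=[0,0]\times[0,1]^{d-1}$, $\theta^{\operatorname{face}}(p)=P_p(|C(Q_0)|=\infty)$, and $p_c^{\operatorname{face}}(d)=\inf\{p:\theta^{\operatorname{face}}(p)>0\}$. *)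

theory Defs
  imports "HOL-Probability.Probability"
begin

text \<open>Points of R^d are represented as functions nat => real whose coordinates
  at indices >= d vanish.\<close>

definition elem_cube :: "nat \<Rightarrow> (nat \<Rightarrow> int) \<Rightarrow> nat set \<Rightarrow> (nat \<Rightarrow> real) set" where
  "elem_cube d l S = {x. (\<forall>j<d. if j \<in> S then real_of_int (l j) \<le> x j \<and> x j \<le> real_of_int (l j) + 1
                                   else x j = real_of_int (l j)) \<and> (\<forall>j\<ge>d. x j = 0)}"

definition elem_cubes :: "nat \<Rightarrow> nat \<Rightarrow> (nat \<Rightarrow> real) set set" where
  "elem_cubes d k = {elem_cube d l S | l S. S \<subseteq> {..<d} \<and> card S = k}"

definition faces :: "nat \<Rightarrow> (nat \<Rightarrow> real) set set" where
  "faces d = elem_cubes d (d - 1)"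

definition face_adjacent :: "nat \<Rightarrow> (nat \<Rightarrow> real) set \<Rightarrow> (nat \<Rightarrow> real) set \<Rightarrow> bool" where
  "face_adjacent d Q Q' \<longleftrightarrow> Q \<in> faces d \<and> Q' \<in> faces d \<and> Q \<inter> Q' \<in> elem_cubes d (d - 2)"

text \<open>Open cluster of Q in configuration w (w Q = True means Q is open).\<close>
definition cluster :: "nat \<Rightarrow> ((nat \<Rightarrow> real) set \<Rightarrow> bool) \<Rightarrow> (nat \<Rightarrow> real) set \<Rightarrow> (nat \<Rightarrow> real) set set" where
  "cluster d w Q = {Q'. w Q \<and> (\<lambda>A B. face_adjacent d A B \<and> w A \<and> w B)\<^sup>*\<^sup>* Q Q'}"

definition Q0 :: "nat \<Rightarrow> (nat \<Rightarrow> real) set" where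
  "Q0 d = elem_cube d (\<lambda>_. 0) ({..<d} - {0})"

definition face_measure :: "nat \<Rightarrow> real \<Rightarrow> ((nat \<Rightarrow> real) set \<Rightarrow> bool) measure" where
  "face_measure d p = (\<Pi>\<^sub>M Q\<in>faces d. measure_pmf (bernoulli_pmf p))"

definition theta_face :: "nat \<Rightarrow> real \<Rightarrow> real" where
  "theta_face d p = measure (face_measure d p)
      {w \<in> space (face_measure d p). infinite (cluster d w (Q0 d))}"

definition pc_face :: "nat \<Rightarrow> real" where
  "pc_face d = Inf {p \<in> {0..1}. theta_face d p > 0}"

end

theory Submission
  imports Defs
begin


lemma cube_mem: "x \<in> elem_cube d l S \<longleftrightarrow> (\<forall>j<d. if j \<in> S then real_of_int (l j) \<le> x j \<and> x j \<le> real_of_int (l j) + 1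
                                   else x j = real_of_int (l j)) \<and> (\<forall>j\<ge>d. x j = 0)"
  by (simp add: elem_cube_def)

lemma cube_cong: "(\<And>j. j < d \<Longrightarrow> l j = l' j) \<Longrightarrow> elem_cube d l S = elem_cube d l' S"
  unfolding elem_cube_def by auto

definition corner :: "nat \<Rightarrow> (nat \<Rightarrow> int) \<Rightarrow> nat \<Rightarrow> real" where
  "corner d l = (\<lambda>j. if j < d then real_of_int (l j) else 0)"

lemma corner_mem: "corner d l \<in> elem_cube d l S"
  by (auto simp: cube_mem corner_def)

definition spans :: "(nat \<Rightarrow> real) set \<Rightarrow> nat \<Rightarrow> bool" where
  "spans A j \<longleftrightarrow> (\<exists>x\<in>A. \<exists>y\<in>A. x j \<noteq> y j)"

lemma int_interval_inter:
  fixes a b :: int and u v :: real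
  assumes "a \<noteq> b" "a \<le> u" "u \<le> a + 1" "b \<le> u" "u \<le> b + 1"
    "a \<le> v" "v \<le> a + 1" "b \<le> v" "v \<le> b + 1"
  shows "u = v"
proof -
  have "a + 1 \<le> b \<or> b + 1 \<le> a" using assms(1) by linarith
  then have "real_of_int a + 1 \<le> b \<or> real_of_int b + 1 \<le> a"
    by (metis of_int_1 of_int_add of_int_le_iff)
  then show ?thesis using assms by linarith
qed

lemma spans_inter:
  assumes x: "x \<in> elem_cube d l S \<inter> elem_cube d l' S'"
  shows "spans (elem_cube d l S \<inter> elem_cube d l' S') j \<longleftrightarrow> j < d \<and> j \<in> S \<and> j \<in> S' \<and> l j = l' j"
proof
  assume "spans (elem_cube d l S \<inter> elem_cube d l' S') j"
  then obtain u v where u: "u \<in> elem_cube d l S" "u \<in> elem_cube d l' S'"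
     and v: "v \<in> elem_cube d l S" "v \<in> elem_cube d l' S'" and uv: "u j \<noteq> v j"
    by (auto simp: spans_def)
  have jd: "j < d"
  proof (rule ccontr)
    assume "\<not> j < d" then show False using u v uv by (auto simp: cube_mem)
  qed
  have jS: "j \<in> S"
  proof (rule ccontr)
    assume "j \<notin> S" then show False using u v uv jd by (auto simp: cube_mem)
  qed
  have jS': "j \<in> S'"
  proof (rule ccontr)
    assume "j \<notin> S'" then show False using u v uv jd by (auto simp: cube_mem)
  qed
  have "l j = l' j"
  proof (rule ccontr)
    assume "l j \<noteq> l' j"
    moreover have "real_of_int (l j) \<le> u j \<and> u j \<le> real_of_int (l j) + 1"
      "real_of_int (l' j) \<le> u j \<and> u j \<le> real_of_int (l' j) + 1"
      "real_of_int (l j) \<le> v j \<and> v j \<le> real_of_int (l j) + 1"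
      "real_of_int (l' j) \<le> v j \<and> v j \<le> real_of_int (l' j) + 1"
      using u v jd jS jS' by (auto simp: cube_mem)
    ultimately show False using int_interval_inter[of "l j" "l' j" "u j" "v j"] uv by auto
  qed
  then show "j < d \<and> j \<in> S \<and> j \<in> S' \<and> l j = l' j" using jd jS jS' by auto
next
  assume h: "j < d \<and> j \<in> S \<and> j \<in> S' \<and> l j = l' j"
  let ?u = "x(j := real_of_int (l j))" and ?v = "x(j := real_of_int (l j) + 1)"
  have "?u \<in> elem_cube d l S \<inter> elem_cube d l' S'" "?v \<in> elem_cube d l S \<inter> elem_cube d l' S'"
    using x h by (auto simp: cube_mem)
  moreover have "?u j \<noteq> ?v j" by simp
  ultimately show "spans (elem_cube d l S \<inter> elem_cube d l' S') j" unfolding spans_def by blast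
qed

lemma spans_cube: "spans (elem_cube d l S) j \<longleftrightarrow> j < d \<and> j \<in> S"
  using spans_inter[of "corner d l" d l S l S j] corner_mem[of d l S] by simp

lemma face_repr:
  assumes "Q \<in> faces d" "d \<ge> 1"
  obtains l i where "i < d" "Q = elem_cube d l ({..<d} - {i})"
proof -
  obtain l S where Q: "Q = elem_cube d l S" "S \<subseteq> {..<d}" "card S = d - 1"
    using assms(1) by (auto simp: faces_def elem_cubes_def)
  have "card ({..<d} - S) = 1" using Q assms(2) by (simp add: card_Diff_subset finite_subset)
  then obtain i where i: "{..<d} - S = {i}" by (auto simp: card_Suc_eq)
  then have "S = {..<d} - {i}" "i < d" using Q(2) by auto
  then show ?thesis using that Q by auto
qed

definition cand1 :: "nat \<Rightarrow> (nat \<Rightarrow> int) \<Rightarrow> nat \<Rightarrow> (nat \<Rightarrow> real) set set" where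
  "cand1 d l i = (\<lambda>(j, s). elem_cube d (l(j := l j + s)) ({..<d} - {i})) ` (({..<d} - {i}) \<times> {-1, 1})"

definition cand2 :: "nat \<Rightarrow> (nat \<Rightarrow> int) \<Rightarrow> nat \<Rightarrow> (nat \<Rightarrow> real) set set" where
  "cand2 d l i = (\<lambda>(j, a, b). elem_cube d (l(i := l i - a, j := l j + b)) ({..<d} - {j})) `
      (({..<d} - {i}) \<times> {0, 1} \<times> {0, 1})"

lemma card_cand:
  assumes "i < d"
  shows "finite (cand1 d l i \<union> cand2 d l i)" "card (cand1 d l i \<union> cand2 d l i) \<le> 6 * d - 6"
proof -
  have f1: "finite (cand1 d l i)" "finite (cand2 d l i)" by (auto simp: cand1_def cand2_def)
  then show "finite (cand1 d l i \<union> cand2 d l i)" by simp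
  have c: "card ({..<d} - {i}) = d - 1" using assms by simp
  have "card (cand1 d l i) \<le> card (({..<d} - {i}) \<times> ({-1, 1}::int set))"
    unfolding cand1_def by (rule card_image_le) simp
  also have "\<dots> = (d - 1) * 2" by (simp add: card_cartesian_product c)
  finally have 1: "card (cand1 d l i) \<le> (d - 1) * 2" .
  have "card (cand2 d l i) \<le> card (({..<d} - {i}) \<times> ({0, 1}::int set) \<times> ({0, 1}::int set))"
    unfolding cand2_def by (rule card_image_le) simp
  also have "\<dots> = (d - 1) * 4" by (simp add: card_cartesian_product c)
  finally have 2: "card (cand2 d l i) \<le> (d - 1) * 4" .
  have "card (cand1 d l i \<union> cand2 d l i) \<le> card (cand1 d l i) + card (cand2 d l i)"
    by (rule card_Un_le)
  then show "card (cand1 d l i \<union> cand2 d l i) \<le> 6 * d - 6" using 1 2 by linarith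
qed

lemma neighbor_cand:
  assumes d: "d \<ge> 2" and i: "i < d" and Q: "Q = elem_cube d l ({..<d} - {i})"
    and adj: "face_adjacent d Q Q'"
  shows "Q' \<in> cand1 d l i \<union> cand2 d l i"
proof -
  have "Q' \<in> faces d" "1 \<le> d" using adj d by (auto simp: face_adjacent_def)
  from face_repr[OF this] obtain l' i' where i': "i' < d" and Q': "Q' = elem_cube d l' ({..<d} - {i'})"
    by blast
  obtain m T where QQ: "Q \<inter> Q' = elem_cube d m T" and T: "T \<subseteq> {..<d}" "card T = d - 2"
    using adj by (auto simp: face_adjacent_def elem_cubes_def)
  have xin: "corner d m \<in> Q \<inter> Q'" using QQ corner_mem by simp
  have Teq: "T = {j. j < d \<and> j \<noteq> i \<and> j \<noteq> i' \<and> l j = l' j}"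
  proof -
    have "j \<in> T \<longleftrightarrow> j < d \<and> j \<noteq> i \<and> j \<noteq> i' \<and> l j = l' j" for j
    proof -
      have "spans (Q \<inter> Q') j \<longleftrightarrow> j < d \<and> j \<in> T" using QQ spans_cube by simp
      moreover have "spans (Q \<inter> Q') j \<longleftrightarrow> j < d \<and> j \<noteq> i \<and> j \<noteq> i' \<and> l j = l' j"
        using spans_inter[of "corner d m" d l "{..<d} - {i}" l' "{..<d} - {i'}" j] xin Q Q' by auto
      ultimately show ?thesis using T by auto
    qed
    then show ?thesis by auto
  qed
  have xQ: "corner d m \<in> elem_cube d l ({..<d} - {i})" and xQ': "corner d m \<in> elem_cube d l' ({..<d} - {i'})"
    using xin Q Q' by auto
  show ?thesis
  proof (cases "i = i'")
    case True
    let ?D = "{j. j < d \<and> j \<noteq> i \<and> l j \<noteq> l' j}"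
    have "?D = ({..<d} - {i}) - T" using Teq True by auto
    moreover have "T \<subseteq> {..<d} - {i}" using Teq by auto
    ultimately have "card ?D = card ({..<d} - {i}) - card T"
      by (simp add: card_Diff_subset finite_subset)
    then have "card ?D = (d - 1) - (d - 2)" using T i by simp
    also have "\<dots> = 1" using d by simp
    finally obtain j where Dj: "?D = {j}" by (auto simp: card_Suc_eq)
    then have j: "j < d" "j \<noteq> i" "l j \<noteq> l' j" by auto
    have oth: "k < d \<Longrightarrow> k \<noteq> j \<Longrightarrow> k \<noteq> i \<Longrightarrow> l k = l' k" for k using Dj by auto
    have "corner d m i = real_of_int (l i)" "corner d m i = real_of_int (l' i)"
      using xQ xQ' i True by (auto simp: cube_mem)
    then have li: "l i = l' i" by simp
    have "real_of_int (l j) \<le> corner d m j \<and> corner d m j \<le> real_of_int (l j) + 1"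
         "real_of_int (l' j) \<le> corner d m j \<and> corner d m j \<le> real_of_int (l' j) + 1"
      using xQ xQ' j True by (auto simp: cube_mem)
    then have "real_of_int (l' j) \<le> real_of_int (l j) + 1" "real_of_int (l j) \<le> real_of_int (l' j) + 1"
      by linarith+
    then have "l' j \<le> l j + 1" "l j \<le> l' j + 1" by linarith+
    then have s: "l' j - l j \<in> {-1, 1}" using j by auto
    have "Q' = (\<lambda>(j, s). elem_cube d (l(j := l j + s)) ({..<d} - {i})) (j, l' j - l j)"
      unfolding prod.case
      unfolding Q' True
    proof (rule cube_cong)
      fix k assume "k < d"
      then show "l' k = (l(j := l j + (l' j - l j))) k"
      proof (cases "k = j")
        case False
        then show ?thesis using oth[of k] li \<open>k < d\<close> by (cases "k = i") simp_all
      qed simp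
    qed
    moreover have "(j, l' j - l j) \<in> ({..<d} - {i}) \<times> {-1, 1}" using j s by simp
    ultimately have "Q' \<in> cand1 d l i" unfolding cand1_def by (rule image_eqI)
    then show ?thesis by simp
  next
    case False
    have "T \<subseteq> {..<d} - {i, i'}" using Teq by auto
    moreover have "card ({..<d} - {i, i'}) = d - 2" using i i' False
      by (subst card_Diff_subset) auto
    ultimately have "T = {..<d} - {i, i'}" using T by (intro card_subset_eq) auto
    then have oth: "k < d \<Longrightarrow> k \<noteq> i \<Longrightarrow> k \<noteq> i' \<Longrightarrow> l k = l' k" for k using Teq by auto
    have "corner d m i = real_of_int (l i)"
         "real_of_int (l' i) \<le> corner d m i \<and> corner d m i \<le> real_of_int (l' i) + 1"
      using xQ xQ' i False by (auto simp: cube_mem)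
    then have "real_of_int (l' i) \<le> real_of_int (l i)" "real_of_int (l i) \<le> real_of_int (l' i) + 1"
      by linarith+
    then have "l' i \<le> l i" "l i \<le> l' i + 1" by linarith+
    then have a: "l i - l' i \<in> {0, 1}" by auto
    have "corner d m i' = real_of_int (l' i')"
         "real_of_int (l i') \<le> corner d m i' \<and> corner d m i' \<le> real_of_int (l i') + 1"
      using xQ xQ' i' False by (auto simp: cube_mem)
    then have "real_of_int (l i') \<le> real_of_int (l' i')" "real_of_int (l' i') \<le> real_of_int (l i') + 1"
      by linarith+
    then have "l i' \<le> l' i'" "l' i' \<le> l i' + 1" by linarith+
    then have b: "l' i' - l i' \<in> {0, 1}" by auto
    have "Q' = (\<lambda>(j, a, b). elem_cube d (l(i := l i - a, j := l j + b)) ({..<d} - {j})) (i', l i - l' i, l' i' - l i')"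
      unfolding prod.case
      unfolding Q'
    proof (rule cube_cong)
      fix k assume k: "k < d"
      show "l' k = (l(i := l i - (l i - l' i), i' := l i' + (l' i' - l i'))) k"
      proof (cases "k = i'")
        case False2: False
        then show ?thesis using oth[of k] k by (cases "k = i") simp_all
      qed simp
    qed
    moreover have "(i', l i - l' i, l' i' - l i') \<in> ({..<d} - {i}) \<times> {0, 1} \<times> {0, 1}"
      using i' False a b by auto
    ultimately have "Q' \<in> cand2 d l i" unfolding cand2_def by (rule image_eqI)
    then show ?thesis by simp
  qed
qed

definition nbrs :: "nat \<Rightarrow> (nat \<Rightarrow> real) set \<Rightarrow> (nat \<Rightarrow> real) set set" where
  "nbrs d Q = {Q'. face_adjacent d Q Q'}"

lemma nbrs_card:
  assumes "d \<ge> 2" "Q \<in> faces d"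
  shows "finite (nbrs d Q)" "card (nbrs d Q) \<le> 6 * d - 6"
proof -
  have "Q \<in> faces d" "1 \<le> d" using assms by auto
  from face_repr[OF this] obtain l i where i: "i < d" and Q: "Q = elem_cube d l ({..<d} - {i})"
    by blast
  have sub: "nbrs d Q \<subseteq> cand1 d l i \<union> cand2 d l i"
    using neighbor_cand[OF assms(1) i Q] by (auto simp: nbrs_def)
  show "finite (nbrs d Q)" using finite_subset[OF sub] card_cand[OF i] by auto
  show "card (nbrs d Q) \<le> 6 * d - 6" using card_mono[OF _ sub] card_cand[OF i, of l] by linarith
qed

lemma adj_sym: "face_adjacent d Q Q' \<Longrightarrow> face_adjacent d Q' Q"
  by (auto simp: face_adjacent_def Int_commute)



fun walk :: "nat \<Rightarrow> (nat \<Rightarrow> real) set list \<Rightarrow> bool" where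
  "walk d [] = False"
| "walk d [x] = (x = Q0 d)"
| "walk d (x # y # ys) = (face_adjacent d x y \<and> walk d (y # ys))"

definition W :: "nat \<Rightarrow> nat \<Rightarrow> (nat \<Rightarrow> real) set list set" where
  "W d n = {ws. walk d ws \<and> distinct ws \<and> length ws = Suc n}"

lemma Q0_face: "d \<ge> 1 \<Longrightarrow> Q0 d \<in> faces d"
  unfolding Q0_def faces_def elem_cubes_def
  by (intro CollectI exI[of _ "\<lambda>_. 0"] exI[of _ "{..<d} - {0}"]) auto

lemma walk_faces: "walk d ws \<Longrightarrow> d \<ge> 1 \<Longrightarrow> Q \<in> set ws \<Longrightarrow> Q \<in> faces d"
  by (induction d ws rule: walk.induct) (auto simp: Q0_face face_adjacent_def)

lemma walk_last: "walk d ws \<Longrightarrow> Q0 d \<in> set ws"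
  by (induction d ws rule: walk.induct) auto

lemma walk_drop: "walk d ws \<Longrightarrow> m < length ws \<Longrightarrow> walk d (drop m ws)"
proof (induction d ws arbitrary: m rule: walk.induct)
  case (3 d x y ys)
  then show ?case by (cases m) auto
qed auto

lemma walk_dropWhile: "walk d ws \<Longrightarrow> c \<in> set ws \<Longrightarrow>
   walk d (dropWhile (\<lambda>x. x \<noteq> c) ws) \<and> dropWhile (\<lambda>x. x \<noteq> c) ws \<noteq> [] \<and> hd (dropWhile (\<lambda>x. x \<noteq> c) ws) = c"
proof (induction d ws rule: walk.induct)
  case (2 d x)
  then show ?case by simp
next
  case (3 d x y ys)
  show ?case
  proof (cases "x = c")
    case True
    then show ?thesis using "3.prems" by simp
  next
    case False
    then have "c \<in> set (y # ys)" "walk d (y # ys)" using "3.prems" by auto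
    then show ?thesis using "3.IH" False by simp
  qed
qed simp

lemma W_finite_card:
  assumes d: "d \<ge> 2"
  shows "finite (W d n) \<and> card (W d n) \<le> 2 * (6 * d - 7) ^ n"
proof (induction n)
  case 0
  have "W d 0 = {[Q0 d]}"
    by (auto simp: W_def length_Suc_conv)
  then show ?case by simp
next
  case (Suc n)
  let ?B = "\<lambda>ws. nbrs d (hd ws) - set ws"
  have sub: "W d (Suc n) \<subseteq> (\<lambda>(ws, Q). Q # ws) ` (SIGMA ws:W d n. ?B ws)"
  proof
    fix vs assume "vs \<in> W d (Suc n)"
    then obtain Q ws where vs: "vs = Q # ws" and ws: "walk d (Q # ws)" "distinct (Q # ws)" "length ws = Suc n"
      by (auto simp: W_def length_Suc_conv)
    then obtain y ys where "ws = y # ys" by (cases ws) auto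
    then have "Q \<in> nbrs d (hd ws)" using ws adj_sym by (auto simp: nbrs_def)
    moreover have "Q \<notin> set ws" using ws(2) by simp
    ultimately have "ws \<in> W d n" "Q \<in> ?B ws" using ws \<open>ws = y # ys\<close> by (auto simp: W_def)
    then have "(ws, Q) \<in> (SIGMA ws:W d n. ?B ws)" by simp
    moreover have "vs = (\<lambda>(ws, Q). Q # ws) (ws, Q)" using vs by simp
    ultimately show "vs \<in> (\<lambda>(ws, Q). Q # ws) ` (SIGMA ws:W d n. ?B ws)" by (rule rev_image_eqI)
  qed
  have fB: "finite (?B ws)" if "ws \<in> W d n" for ws
  proof -
    have "hd ws \<in> faces d" using that walk_faces[of d ws "hd ws"] d
      by (cases ws) (auto simp: W_def)
    then show ?thesis using nbrs_card[OF d] by auto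
  qed
  have cB: "card (?B ws) \<le> (if n = 0 then 6 * d - 6 else 6 * d - 7)" if wsin: "ws \<in> W d n" for ws
  proof -
    have hf: "hd ws \<in> faces d" using that walk_faces[of d ws "hd ws"] d
      by (cases ws) (auto simp: W_def)
    have "card (?B ws) \<le> card (nbrs d (hd ws))" using nbrs_card[OF d hf] by (intro card_mono) auto
    moreover have "n \<noteq> 0 \<Longrightarrow> card (?B ws) \<le> card (nbrs d (hd ws)) - 1"
    proof -
      assume "n \<noteq> 0"
      have "length ws = Suc n" using wsin by (simp add: W_def)
      then obtain x y ys where ws: "ws = x # y # ys" using \<open>n \<noteq> 0\<close>
        by (cases ws; cases "tl ws") auto
      then have "y \<in> nbrs d (hd ws) \<inter> set ws" using wsin by (auto simp: W_def nbrs_def)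
      then have "card (?B ws) = card (nbrs d (hd ws)) - card (nbrs d (hd ws) \<inter> set ws)"
        using nbrs_card[OF d hf] by (metis card_Diff_subset_Int finite_Int)
      moreover have "card (nbrs d (hd ws) \<inter> set ws) \<ge> 1"
        using \<open>y \<in> _\<close> by (metis One_nat_def Suc_leI card_gt_0_iff empty_iff finite_Int finite_set)
      ultimately show ?thesis by linarith
    qed
    ultimately show ?thesis using nbrs_card[OF d hf] by (auto split: if_splits)
  qed
  have fin: "finite (SIGMA ws:W d n. ?B ws)" using Suc.IH fB by auto
  have "card (W d (Suc n)) \<le> card ((\<lambda>(ws, Q). Q # ws) ` (SIGMA ws:W d n. ?B ws))"
    using sub fin by (intro card_mono) auto
  also have "\<dots> \<le> card (SIGMA ws:W d n. ?B ws)" by (rule card_image_le[OF fin])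
  also have "\<dots> = (\<Sum>ws\<in>W d n. card (?B ws))" using Suc.IH fB by (simp add: card_SigmaI)
  also have "\<dots> \<le> (\<Sum>ws\<in>W d n. (if n = 0 then 6 * d - 6 else 6 * d - 7))" by (rule sum_mono) (rule cB)
  also have "\<dots> = card (W d n) * (if n = 0 then 6 * d - 6 else 6 * d - 7)" by simp
  also have "\<dots> \<le> 2 * (6 * d - 7) ^ Suc n"
  proof (cases "n = 0")
    case True
    have "W d n = {[Q0 d]}" using True by (auto simp: W_def length_Suc_conv)
    then have "card (W d n) = 1" by simp
    then show ?thesis using True d by simp
  next
    case False
    then have "card (W d n) * (6 * d - 7) \<le> 2 * (6 * d - 7) ^ n * (6 * d - 7)"
      using Suc.IH by (intro mult_right_mono) auto
    then show ?thesis using False by (simp add: mult.commute mult.left_commute)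
  qed
  finally show ?case using finite_subset[OF sub] fin by auto
qed



abbreviation oadj :: "nat \<Rightarrow> ((nat \<Rightarrow> real) set \<Rightarrow> bool) \<Rightarrow> (nat \<Rightarrow> real) set \<Rightarrow> (nat \<Rightarrow> real) set \<Rightarrow> bool" where
  "oadj d w \<equiv> (\<lambda>A B. face_adjacent d A B \<and> w A \<and> w B)"

lemma reach_walk:
  assumes "(oadj d w)\<^sup>*\<^sup>* (Q0 d) Q" "w (Q0 d)"
  shows "\<exists>ws. walk d ws \<and> distinct ws \<and> (\<forall>x\<in>set ws. w x) \<and> ws \<noteq> [] \<and> hd ws = Q"
  using assms(1)
proof (induction rule: rtranclp_induct)
  case base
  show ?case using assms(2) by (intro exI[of _ "[Q0 d]"]) simp
next
  case (step b c)
  then obtain ws where ws: "walk d ws" "distinct ws" "\<forall>x\<in>set ws. w x" "ws \<noteq> []" "hd ws = b"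
    by blast
  show ?case
  proof (cases "c \<in> set ws")
    case True
    let ?vs = "dropWhile (\<lambda>x. x \<noteq> c) ws"
    have "walk d ?vs \<and> ?vs \<noteq> [] \<and> hd ?vs = c" using walk_dropWhile[OF ws(1) True] .
    moreover have "distinct ?vs" using ws(2) by simp
    moreover have "\<forall>x\<in>set ?vs. w x" using ws(3) by (auto dest: set_dropWhileD)
    ultimately show ?thesis by blast
  next
    case False
    obtain rest where ws': "ws = b # rest" using ws(4,5) by (cases ws) auto
    have "walk d (c # ws)" using ws(1) step(2) ws' adj_sym by simp
    moreover have "distinct (c # ws)" using ws(2) False by simp
    moreover have "\<forall>x\<in>set (c # ws). w x" using ws(3) step(2) by simp
    ultimately show ?thesis by (intro exI[of _ "c # ws"]) simp
  qed
qed

lemma walk_reach: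
  "walk d ws \<Longrightarrow> \<forall>x\<in>set ws. w x \<Longrightarrow> \<forall>x\<in>set ws. (oadj d w)\<^sup>*\<^sup>* (Q0 d) x"
proof (induction d ws rule: walk.induct)
  case (3 d x y ys)
  then have IH: "\<forall>z\<in>set (y # ys). (oadj d w)\<^sup>*\<^sup>* (Q0 d) z" by simp
  have "oadj d w y x" using "3.prems" adj_sym by simp
  moreover have "(oadj d w)\<^sup>*\<^sup>* (Q0 d) y" using IH by simp
  ultimately have "(oadj d w)\<^sup>*\<^sup>* (Q0 d) x" by (rule rtranclp.rtrancl_into_rtrancl[rotated])
  then show ?case using IH by simp
qed auto

lemma infinite_cluster_iff:
  assumes d: "d \<ge> 2"
  shows "infinite (cluster d w (Q0 d)) \<longleftrightarrow> (\<forall>n. \<exists>ws\<in>W d n. \<forall>x\<in>set ws. w x)"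
proof
  assume inf: "infinite (cluster d w (Q0 d))"
  show "\<forall>n. \<exists>ws\<in>W d n. \<forall>x\<in>set ws. w x"
  proof (rule ccontr)
    assume "\<not> (\<forall>n. \<exists>ws\<in>W d n. \<forall>x\<in>set ws. w x)"
    then obtain n where no: "\<And>ws. ws \<in> W d n \<Longrightarrow> \<not> (\<forall>x\<in>set ws. w x)" by blast
    have "cluster d w (Q0 d) \<subseteq> hd ` (\<Union>k<n. W d k)"
    proof
      fix Q assume "Q \<in> cluster d w (Q0 d)"
      then have "(oadj d w)\<^sup>*\<^sup>* (Q0 d) Q" "w (Q0 d)" by (auto simp: cluster_def)
      from reach_walk[OF this] obtain ws where
        ws: "walk d ws" "distinct ws" "\<forall>x\<in>set ws. w x" "ws \<noteq> []" "hd ws = Q" by blast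
      obtain k where k: "length ws = Suc k" using ws(4) by (cases ws) auto
      show "Q \<in> hd ` (\<Union>k<n. W d k)"
      proof (cases "k < n")
        case True
        then have "ws \<in> (\<Union>k<n. W d k)" using ws k by (auto simp: W_def)
        then show ?thesis using ws(5) by blast
      next
        case False
        let ?vs = "drop (k - n) ws"
        have "?vs \<in> W d n" using ws k False walk_drop[OF ws(1), of "k - n"]
          by (auto simp: W_def distinct_drop)
        moreover have "\<forall>x\<in>set ?vs. w x" using ws(3) by (auto dest: in_set_dropD)
        ultimately show ?thesis using no by blast
      qed
    qed
    moreover have "finite (hd ` (\<Union>k<n. W d k))" using W_finite_card[OF d] by auto
    ultimately show False using inf finite_subset by blast
  qed
next
  assume all: "\<forall>n. \<exists>ws\<in>W d n. \<forall>x\<in>set ws. w x"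
  show "infinite (cluster d w (Q0 d))"
  proof
    assume fin: "finite (cluster d w (Q0 d))"
    obtain ws where ws: "ws \<in> W d (card (cluster d w (Q0 d)))" "\<forall>x\<in>set ws. w x" using all by blast
    have wk: "walk d ws" and dist: "distinct ws" and len: "length ws = Suc (card (cluster d w (Q0 d)))"
      using ws(1) by (auto simp: W_def)
    have "w (Q0 d)" using ws(2) walk_last[OF wk] by blast
    then have "set ws \<subseteq> cluster d w (Q0 d)" using walk_reach[OF wk ws(2)] by (auto simp: cluster_def)
    then have "card (set ws) \<le> card (cluster d w (Q0 d))" using fin by (rule card_mono[rotated])
    then show False using dist len by (simp add: distinct_card)
  qed
qed



definition cyl :: "nat \<Rightarrow> real \<Rightarrow> (nat \<Rightarrow> real) set set \<Rightarrow> ((nat \<Rightarrow> real) set \<Rightarrow> bool) set" where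
  "cyl d p F = {w \<in> space (face_measure d p). \<forall>Q\<in>F. w Q}"

lemma cyl_props:
  assumes "F \<subseteq> faces d" "finite F" "0 \<le> p" "p \<le> 1"
  shows "cyl d p F \<in> sets (face_measure d p)" "measure (face_measure d p) (cyl d p F) = p ^ card F"
proof -
  interpret P: product_prob_space "\<lambda>_::(nat \<Rightarrow> real) set. measure_pmf (bernoulli_pmf p)" "faces d"
    by (rule product_prob_spaceI) (rule prob_space_measure_pmf)
  have eq: "cyl d p F = prod_emb (faces d) (\<lambda>_. measure_pmf (bernoulli_pmf p)) F (\<Pi>\<^sub>E Q\<in>F. {True})"
    unfolding cyl_def face_measure_def prod_emb_def space_PiM space_measure_pmf
  proof (intro set_eqI iffI)
    fix x assume "x \<in> {w \<in> faces d \<rightarrow>\<^sub>E UNIV. \<forall>Q\<in>F. w Q}"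
    then show "x \<in> (\<lambda>x. restrict x F) -` (\<Pi>\<^sub>E Q\<in>F. {True}) \<inter> (faces d \<rightarrow>\<^sub>E UNIV)"
      by (simp only: vimage_eq Int_iff restrict_PiE_iff mem_Collect_eq) simp
  next
    fix x assume "x \<in> (\<lambda>x. restrict x F) -` (\<Pi>\<^sub>E Q\<in>F. {True}) \<inter> (faces d \<rightarrow>\<^sub>E UNIV)"
    then show "x \<in> {w \<in> faces d \<rightarrow>\<^sub>E UNIV. \<forall>Q\<in>F. w Q}"
      by (simp only: vimage_eq Int_iff restrict_PiE_iff mem_Collect_eq) simp
  qed
  show "cyl d p F \<in> sets (face_measure d p)"
    unfolding eq face_measure_def
    by (rule measurable_prod_emb[OF assms(1)]) (rule sets_PiM_I_finite[OF assms(2)], simp)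
  have "measure (face_measure d p) (cyl d p F) = (\<Prod>Q\<in>F. measure (measure_pmf (bernoulli_pmf p)) {True})"
    unfolding eq face_measure_def by (rule P.measure_PiM_emb[OF assms(1,2)]) simp
  also have "\<dots> = p ^ card F" using assms by (simp add: measure_pmf_single)
  finally show "measure (face_measure d p) (cyl d p F) = p ^ card F" .
qed

lemma prob_face_measure: "prob_space (face_measure d p)"
  unfolding face_measure_def by (rule prob_space_PiM) (rule prob_space_measure_pmf)

definition Aev :: "nat \<Rightarrow> real \<Rightarrow> nat \<Rightarrow> ((nat \<Rightarrow> real) set \<Rightarrow> bool) set" where
  "Aev d p n = (\<Union>ws\<in>W d n. cyl d p (set ws))"

lemma Aev_props:
  assumes d: "d \<ge> 2" and p: "0 \<le> p" "p \<le> 1"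
  shows "Aev d p n \<in> sets (face_measure d p)"
    "measure (face_measure d p) (Aev d p n) \<le> real (2 * (6 * d - 7) ^ n) * p ^ Suc n"
proof -
  have fW: "finite (W d n)" using W_finite_card[OF d] by simp
  have sf: "set ws \<subseteq> faces d" if "ws \<in> W d n" for ws
    using that walk_faces[of d ws] d by (auto simp: W_def)
  show "Aev d p n \<in> sets (face_measure d p)"
    unfolding Aev_def using fW cyl_props(1)[OF sf _ p] by auto
  have "measure (face_measure d p) (Aev d p n) \<le> (\<Sum>ws\<in>W d n. measure (face_measure d p) (cyl d p (set ws)))"
    unfolding Aev_def using fW cyl_props(1)[OF sf _ p] by (intro measure_UNION_le) auto
  also have "\<dots> = (\<Sum>ws\<in>W d n. p ^ Suc n)"
  proof (rule sum.cong)
    fix ws assume ws: "ws \<in> W d n"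
    then have "card (set ws) = Suc n" by (auto simp: W_def distinct_card)
    then show "measure (face_measure d p) (cyl d p (set ws)) = p ^ Suc n"
      using cyl_props(2)[OF sf[OF ws] _ p] by simp
  qed simp
  also have "\<dots> = real (card (W d n)) * p ^ Suc n" by simp
  also have "\<dots> \<le> real (2 * (6 * d - 7) ^ n) * p ^ Suc n"
  proof (rule mult_right_mono)
    show "real (card (W d n)) \<le> real (2 * (6 * d - 7) ^ n)"
      using W_finite_card[OF d, of n] by (simp only: of_nat_le_iff)
  qed (use p in simp)
  finally show "measure (face_measure d p) (Aev d p n) \<le> real (2 * (6 * d - 7) ^ n) * p ^ Suc n" by simp
qed

lemma event_eq:
  assumes d: "d \<ge> 2"
  shows "{w \<in> space (face_measure d p). infinite (cluster d w (Q0 d))} =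
         {w \<in> space (face_measure d p). \<forall>n. w \<in> Aev d p n}"
  using infinite_cluster_iff[OF d] by (auto simp: Aev_def cyl_def)



definition line :: "nat \<Rightarrow> nat \<Rightarrow> (nat \<Rightarrow> real) set" where
  "line d k = elem_cube d (\<lambda>j. if j = 1 then int k else 0) ({..<d} - {0})"

fun lw :: "nat \<Rightarrow> nat \<Rightarrow> (nat \<Rightarrow> real) set list" where
  "lw d 0 = [line d 0]"
| "lw d (Suc n) = line d (Suc n) # lw d n"

lemma line0: "line d 0 = Q0 d"
proof -
  have "(\<lambda>j. if j = 1 then int 0 else 0) = (\<lambda>_::nat. 0::int)" by auto
  then show ?thesis unfolding line_def Q0_def by simp
qed

lemma line_inj:
  assumes d: "d \<ge> 2" and eq: "line d a = line d b"
  shows "a = b"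
proof -
  define x where "x = (\<lambda>j::nat. if j = 1 then real a + 1/2 else 0)"
  have pw: "(if j \<in> {..<d} - {0} then real_of_int (if j = 1 then int a else 0) \<le> x j \<and>
               x j \<le> real_of_int (if j = 1 then int a else 0) + 1
             else x j = real_of_int (if j = 1 then int a else 0))" if "j < d" for j
    using that by (cases "j = 0"; cases "j = 1") (auto simp: x_def)
  have "x \<in> line d a" unfolding line_def cube_mem using pw d by (auto simp: x_def)
  then have "x \<in> line d b" using eq by simp
  then have "\<forall>j<d. (if j \<in> {..<d} - {0}
            then real_of_int (if j = 1 then int b else 0) \<le> x j \<and>
                 x j \<le> real_of_int (if j = 1 then int b else 0) + 1
            else x j = real_of_int (if j = 1 then int b else 0))" unfolding line_def cube_mem by blast
  moreover have "(1::nat) < d" "(1::nat) \<in> {..<d} - {0}" using d by auto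
  ultimately have "real_of_int (int b) \<le> x 1 \<and> x 1 \<le> real_of_int (int b) + 1" by fastforce
  then have "real b \<le> x 1 \<and> x 1 \<le> real b + 1" by simp
  then have "real b \<le> real a + 1/2" "real a + 1/2 \<le> real b + 1" by (auto simp: x_def)
  then show "a = b" by linarith
qed

lemma line_face: "d \<ge> 2 \<Longrightarrow> line d k \<in> faces d"
  unfolding line_def faces_def elem_cubes_def
  by (intro CollectI exI[of _ "\<lambda>j. if j = 1 then int k else 0"] exI[of _ "{..<d} - {0}"]) auto

lemma line_adj:
  assumes d: "d \<ge> 2"
  shows "face_adjacent d (line d (Suc k)) (line d k)"
proof -
  let ?L = "\<lambda>k j. if j = (1::nat) then int k else 0"
  let ?S = "{..<d} - {0}" and ?T = "{..<d} - {0, 1}"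
  have pw: "((if j \<in> ?S then real_of_int (?L (Suc k) j) \<le> x j \<and> x j \<le> real_of_int (?L (Suc k) j) + 1
             else x j = real_of_int (?L (Suc k) j)) \<and>
            (if j \<in> ?S then real_of_int (?L k j) \<le> x j \<and> x j \<le> real_of_int (?L k j) + 1
             else x j = real_of_int (?L k j))) \<longleftrightarrow>
            (if j \<in> ?T then real_of_int (?L (Suc k) j) \<le> x j \<and> x j \<le> real_of_int (?L (Suc k) j) + 1
             else x j = real_of_int (?L (Suc k) j))" if "j < d" for j x
    using that by (cases "j = 0"; cases "j = 1") auto
  have eq: "line d (Suc k) \<inter> line d k = elem_cube d (?L (Suc k)) ?T"
  proof (rule set_eqI)
    fix x
    show "x \<in> line d (Suc k) \<inter> line d k \<longleftrightarrow> x \<in> elem_cube d (?L (Suc k)) ?T"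
      unfolding line_def cube_mem Int_iff using pw[of _ x] by blast
  qed
  have "card ?T = d - 2" using d by (subst card_Diff_subset) auto
  then have "line d (Suc k) \<inter> line d k \<in> elem_cubes d (d - 2)"
    unfolding eq elem_cubes_def by blast
  then show ?thesis using line_face[OF d] by (simp add: face_adjacent_def)
qed

lemma lw_props:
  assumes d: "d \<ge> 2"
  shows "walk d (lw d n) \<and> hd (lw d n) = line d n \<and> set (lw d n) = line d ` {..n} \<and> length (lw d n) = Suc n"
proof (induction n)
  case 0
  then show ?case by (simp add: line0)
next
  case (Suc n)
  obtain rest where r: "lw d n = line d n # rest" using Suc by (cases "lw d n") auto
  have "walk d (lw d (Suc n))" using Suc r line_adj[OF d, of n] by simp
  moreover have "line d ` {..Suc n} = insert (line d (Suc n)) (line d ` {..n})"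
    by (simp add: atMost_Suc)
  ultimately show ?case using Suc by simp
qed

lemma lw_W:
  assumes d: "d \<ge> 2"
  shows "lw d n \<in> W d n"
proof -
  have "distinct (lw d n)"
  proof (induction n)
    case (Suc n)
    have "line d (Suc n) \<notin> set (lw d n)"
    proof
      assume "line d (Suc n) \<in> set (lw d n)"
      then obtain k where "k \<le> n" "line d (Suc n) = line d k" using lw_props[OF d, of n] by auto
      then have "Suc n = k" using line_inj[OF d] by blast
      then show False using \<open>k \<le> n\<close> by simp
    qed
    then show ?case using Suc by simp
  qed simp
  then show ?thesis using lw_props[OF d, of n] by (simp add: W_def)
qed



lemma theta_zero:
  assumes d: "d \<ge> 2" and p: "0 \<le> p" "p \<le> 1" and small: "p * real (6 * d - 7) < 1"
  shows "theta_face d p = 0"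
proof -
  interpret prob_space "face_measure d p" by (rule prob_face_measure)
  let ?E = "{w \<in> space (face_measure d p). infinite (cluster d w (Q0 d))}"
  let ?q = "p * real (6 * d - 7)"
  have bound: "theta_face d p \<le> 2 * p * ?q ^ n" for n
  proof -
    have "?E \<subseteq> Aev d p n" unfolding event_eq[OF d] by blast
    then have "theta_face d p \<le> measure (face_measure d p) (Aev d p n)"
      unfolding theta_face_def by (rule finite_measure_mono) (rule Aev_props(1)[OF d p])
    also have "\<dots> \<le> real (2 * (6 * d - 7) ^ n) * p ^ Suc n" by (rule Aev_props(2)[OF d p])
    also have "\<dots> = 2 * p * ?q ^ n" by (simp add: power_mult_distrib)
    finally show ?thesis .
  qed
  have "(\<lambda>n. 2 * p * ?q ^ n) \<longlonglongrightarrow> 2 * p * 0"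
    by (intro tendsto_mult tendsto_const LIMSEQ_power_zero) (use small p in simp)
  then have "theta_face d p \<le> 0"
    using bound by (intro LIMSEQ_le_const[of "\<lambda>n. 2 * p * ?q ^ n"]) auto
  moreover have "theta_face d p \<ge> 0" unfolding theta_face_def by simp
  ultimately show ?thesis by simp
qed

lemma theta_one:
  assumes d: "d \<ge> 2"
  shows "theta_face d 1 = 1"
proof -
  interpret prob_space "face_measure d 1" by (rule prob_face_measure)
  let ?M = "face_measure d 1"
  have A: "Aev d 1 n \<in> sets ?M" for n using Aev_props(1)[OF d] by simp
  have P1: "prob (Aev d 1 n) = 1" for n
  proof -
    have sub: "cyl d 1 (set (lw d n)) \<subseteq> Aev d 1 n" using lw_W[OF d] unfolding Aev_def by blast
    have sf: "set (lw d n) \<subseteq> faces d" using lw_W[OF d, of n] walk_faces[of d "lw d n"] d by (auto simp: W_def)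
    have "prob (cyl d 1 (set (lw d n))) = 1" using cyl_props(2)[OF sf] by simp
    then have "1 \<le> prob (Aev d 1 n)" using finite_measure_mono[OF sub A] by simp
    then show ?thesis using prob_le_1[of "Aev d 1 n"] by linarith
  qed
  have "AE w in ?M. w \<in> Aev d 1 n" for n using prob_eq_1[OF A] P1 by simp
  then have AE: "AE w in ?M. \<forall>n. w \<in> Aev d 1 n" by (simp add: AE_all_countable)
  have "{w \<in> space ?M. \<forall>n. w \<in> Aev d 1 n} \<in> sets ?M"
  proof (rule sets.sets_Collect_countable_All)
    fix n
    have "{w \<in> space ?M. w \<in> Aev d 1 n} = Aev d 1 n" using sets.sets_into_space[OF A] by blast
    then show "{w \<in> space ?M. w \<in> Aev d 1 n} \<in> sets ?M" using A by simp
  qed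
  moreover have "AE w in ?M. w \<in> {w \<in> space ?M. \<forall>n. w \<in> Aev d 1 n}"
    using AE by (rule AE_mp) (auto intro!: AE_I2)
  ultimately have "prob {w \<in> space ?M. \<forall>n. w \<in> Aev d 1 n} = 1" by (simp add: prob_eq_1)
  then show ?thesis unfolding theta_face_def event_eq[OF d] .
qed

theorem proposition2p9:
  fixes d :: nat
  assumes "d \<ge> 2"
  shows "1 / (6 * real d - 7) \<le> pc_face d"
proof -
  let ?S = "{p \<in> {0..1}. theta_face d p > 0}"
  have pos: "6 * real d - 7 > 0" using assms by simp
  have r: "real (6 * d - 7) = 6 * real d - 7" using assms by simp
  have "1 \<in> ?S" using theta_one[OF assms] by simp
  then have ne: "?S \<noteq> {}" by blast
  have "1 / (6 * real d - 7) \<le> p" if "p \<in> ?S" for p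
  proof (rule ccontr)
    assume "\<not> 1 / (6 * real d - 7) \<le> p"
    then have "p * (6 * real d - 7) < 1" using pos by (simp add: field_simps)
    then have "theta_face d p = 0" using that assms by (intro theta_zero) (auto simp: r)
    then show False using that by simp
  qed
  then show ?thesis unfolding pc_face_def using ne by (intro cInf_greatest) auto
qed


end
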